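(* Let $G$ be a connected cograph which is $k$-connected, and let $S$ be a minimal vertex separator of $G$ with $|S|=k$. Then every edge $\{u,v\}$ of $G\setminus S$ is universal to $S$, i.e. for every $s\in S$, $\{u,s\}\in E(G)$ or $\{v,s\}\in E(G)$.
   Context: A cograph is a graph that can be built from single vertices by repeatedly taking disjoint unions and joins; equivalently, a graph with no induced path on four vertices. $G\setminus S$ is the subgraph induced on $V(G)\setminus S$. A vertex separator of a connected graph $G$ is a set $S\subset V(G)$ such that $G\setminus S$ is disconnected; it is minimal if no proper subset of $S$ is a vertex separator; a minimum vertex separator is a minimal vertex separator of least size. The paper calls $G$ $k$-connected if there exists a minimum vertex separator of size $k$. *)

theory Defs
  imports Main
begin

text \<open>A graph is given by a vertex set V and an edge relation E (E x y means {x,y} is an edge).\<close>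

inductive cograph :: "'a set \<Rightarrow> ('a \<Rightarrow> 'a \<Rightarrow> bool) \<Rightarrow> bool" where
  single: "cograph {v} (\<lambda>x y. False)"
| union: "cograph V1 E1 \<Longrightarrow> cograph V2 E2 \<Longrightarrow> V1 \<inter> V2 = {} \<Longrightarrow>
           cograph (V1 \<union> V2) (\<lambda>x y. E1 x y \<or> E2 x y)"
| join: "cograph V1 E1 \<Longrightarrow> cograph V2 E2 \<Longrightarrow> V1 \<inter> V2 = {} \<Longrightarrow>
           cograph (V1 \<union> V2) (\<lambda>x y. E1 x y \<or> E2 x y \<or> (x \<in> V1 \<and> y \<in> V2) \<or> (x \<in> V2 \<and> y \<in> V1))"

definition connected_on :: "'a set \<Rightarrow> ('a \<Rightarrow> 'a \<Rightarrow> bool) \<Rightarrow> bool" where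
  "connected_on W E \<longleftrightarrow> W \<noteq> {} \<and>
     (\<forall>x\<in>W. \<forall>y\<in>W. (x, y) \<in> {(a, b). a \<in> W \<and> b \<in> W \<and> E a b}\<^sup>*)"

definition vertex_separator :: "'a set \<Rightarrow> ('a \<Rightarrow> 'a \<Rightarrow> bool) \<Rightarrow> 'a set \<Rightarrow> bool" where
  "vertex_separator V E S \<longleftrightarrow> S \<subset> V \<and> \<not> connected_on (V - S) E"

definition minimal_vertex_separator :: "'a set \<Rightarrow> ('a \<Rightarrow> 'a \<Rightarrow> bool) \<Rightarrow> 'a set \<Rightarrow> bool" where
  "minimal_vertex_separator V E S \<longleftrightarrow> vertex_separator V E S \<and>
     (\<forall>T. T \<subset> S \<longrightarrow> \<not> vertex_separator V E T)"

definition minimum_vertex_separator :: "'a set \<Rightarrow> ('a \<Rightarrow> 'a \<Rightarrow> bool) \<Rightarrow> 'a set \<Rightarrow> bool" where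
  "minimum_vertex_separator V E S \<longleftrightarrow> minimal_vertex_separator V E S \<and>
     (\<forall>T. minimal_vertex_separator V E T \<longrightarrow> card S \<le> card T)"

text \<open>The paper's notion: G is k-connected if there is a minimum vertex separator of size k.\<close>
definition k_connected :: "'a set \<Rightarrow> ('a \<Rightarrow> 'a \<Rightarrow> bool) \<Rightarrow> nat \<Rightarrow> bool" where
  "k_connected V E k \<longleftrightarrow> (\<exists>S. minimum_vertex_separator V E S \<and> card S = k)"

end

theory Submission
  imports Defs
begin

lemma cograph_in:
  assumes "cograph V E"
  shows "\<forall>x y. E x y \<longrightarrow> x \<in> V \<and> y \<in> V \<and> E y x"
  using assms by induction auto

lemma cograph_props:
  assumes "cograph V E"
  shows "(\<forall>x y. E x y \<longrightarrow> x \<in> V \<and> y \<in> V \<and> E y x) \<and>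
         (\<forall>a b c d. \<not> (E a b \<and> E b c \<and> E c d \<and> \<not> E a c \<and> \<not> E b d \<and> \<not> E a d))"
  using assms
proof induction
  case (single v)
  then show ?case by simp
next
  case (union V1 E1 V2 E2)
  have i1: "\<forall>x y. E1 x y \<longrightarrow> x \<in> V1 \<and> y \<in> V1 \<and> E1 y x" using union by blast
  have i2: "\<forall>x y. E2 x y \<longrightarrow> x \<in> V2 \<and> y \<in> V2 \<and> E2 y x" using union by blast
  have p1: "\<forall>a b c d. \<not> (E1 a b \<and> E1 b c \<and> E1 c d \<and> \<not> E1 a c \<and> \<not> E1 b d \<and> \<not> E1 a d)" using union by blast
  have p2: "\<forall>a b c d. \<not> (E2 a b \<and> E2 b c \<and> E2 c d \<and> \<not> E2 a c \<and> \<not> E2 b d \<and> \<not> E2 a d)" using union by blast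
  have d: "V1 \<inter> V2 = {}" by fact
  have e12: "\<And>x y. E1 x y \<Longrightarrow> \<not> E2 x y" "\<And>x y. E2 x y \<Longrightarrow> \<not> E1 x y"
    "\<And>x y z. E1 x y \<Longrightarrow> \<not> E2 y z" "\<And>x y z. E1 x y \<Longrightarrow> \<not> E2 z x"
    "\<And>x y z. E2 x y \<Longrightarrow> \<not> E1 y z" "\<And>x y z. E2 x y \<Longrightarrow> \<not> E1 z x"
    using i1 i2 d by blast+
  show ?case
  proof
    show "\<forall>x y. E1 x y \<or> E2 x y \<longrightarrow> x \<in> V1 \<union> V2 \<and> y \<in> V1 \<union> V2 \<and> (E1 y x \<or> E2 y x)"
      using i1 i2 by blast
    show "\<forall>a b c d. \<not> ((E1 a b \<or> E2 a b) \<and> (E1 b c \<or> E2 b c) \<and> (E1 c d \<or> E2 c d) \<and> \<not> (E1 a c \<or> E2 a c) \<and> \<not> (E1 b d \<or> E2 b d) \<and> \<not> (E1 a d \<or> E2 a d))"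
      using p1 p2 e12 by metis
  qed
next
  case (join V1 E1 V2 E2)
  have i1: "\<forall>x y. E1 x y \<longrightarrow> x \<in> V1 \<and> y \<in> V1 \<and> E1 y x" using join by blast
  have i2: "\<forall>x y. E2 x y \<longrightarrow> x \<in> V2 \<and> y \<in> V2 \<and> E2 y x" using join by blast
  have p1: "\<forall>a b c d. \<not> (E1 a b \<and> E1 b c \<and> E1 c d \<and> \<not> E1 a c \<and> \<not> E1 b d \<and> \<not> E1 a d)" using join by blast
  have p2: "\<forall>a b c d. \<not> (E2 a b \<and> E2 b c \<and> E2 c d \<and> \<not> E2 a c \<and> \<not> E2 b d \<and> \<not> E2 a d)" using join by blast
  have d: "V1 \<inter> V2 = {}" by fact
  let ?E = "\<lambda>x y. E1 x y \<or> E2 x y \<or> (x \<in> V1 \<and> y \<in> V2) \<or> (x \<in> V2 \<and> y \<in> V1)"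
  show ?case
  proof
    show "\<forall>x y. ?E x y \<longrightarrow> x \<in> V1 \<union> V2 \<and> y \<in> V1 \<union> V2 \<and> ?E y x"
      using i1 i2 by blast
    show "\<forall>a b c d. \<not> (?E a b \<and> ?E b c \<and> ?E c d \<and> \<not> ?E a c \<and> \<not> ?E b d \<and> \<not> ?E a d)"
    proof (intro allI notI)
      fix a b c d assume h: "?E a b \<and> ?E b c \<and> ?E c d \<and> \<not> ?E a c \<and> \<not> ?E b d \<and> \<not> ?E a d"
      have V: "a \<in> V1 \<union> V2" "b \<in> V1 \<union> V2" "c \<in> V1 \<union> V2" "d \<in> V1 \<union> V2"
        using h i1 i2 by blast+
      show False
      proof (cases "a \<in> V1")
        case True
        then have "c \<in> V1" "d \<in> V1" "b \<in> V1" using h V d by blast+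
        then have "E1 a b \<and> E1 b c \<and> E1 c d \<and> \<not> E1 a c \<and> \<not> E1 b d \<and> \<not> E1 a d"
          using h True d i2 by blast
        then show False using p1 by blast
      next
        case False
        then have a2: "a \<in> V2" using V by blast
        then have "c \<in> V2" "d \<in> V2" "b \<in> V2" using h V d by blast+
        then have "E2 a b \<and> E2 b c \<and> E2 c d \<and> \<not> E2 a c \<and> \<not> E2 b d \<and> \<not> E2 a d"
          using h a2 d i1 by blast
        then show False using p2 by blast
      qed
    qed
  qed
qed

lemma closed_reach:
  assumes "(x, y) \<in> {(a, b). a \<in> U \<and> b \<in> U \<and> E a b}\<^sup>*" and "x \<in> K"
    and "\<And>w w'. w \<in> K \<Longrightarrow> w' \<in> U \<Longrightarrow> E w w' \<Longrightarrow> w' \<in> K"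
  shows "y \<in> K"
  using assms(1,2)
proof (induction rule: rtrancl_induct)
  case base then show ?case by simp
next
  case (step y z) then show ?case using assms(3) by blast
qed

theorem corollary1:
  fixes V :: "'a set" and E :: "'a \<Rightarrow> 'a \<Rightarrow> bool" and S :: "'a set" and k :: nat
  assumes "cograph V E"
    and "connected_on V E"
    and "k_connected V E k"
    and "minimal_vertex_separator V E S"
    and "card S = k"
  shows "\<forall>u v. u \<in> V - S \<longrightarrow> v \<in> V - S \<longrightarrow> E u v \<longrightarrow> (\<forall>s\<in>S. E u s \<or> E v s)"
proof (intro allI impI ballI)
  fix u v s assume u: "u \<in> V - S" and "v \<in> V - S" "E u v" and s: "s \<in> S"
  define W where "W = V - S"
  define R where "R = {(a, b). a \<in> W \<and> b \<in> W \<and> E a b}"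
  define R' where "R' = {(a, b). a \<in> W \<union> {s} \<and> b \<in> W \<union> {s} \<and> E a b}"
  have P: "\<And>x y. E x y \<Longrightarrow> x \<in> V \<and> y \<in> V \<and> E y x"
   and P4: "\<And>a b c d. \<not> (E a b \<and> E b c \<and> E c d \<and> \<not> E a c \<and> \<not> E b d \<and> \<not> E a d)"
    using cograph_props[OF assms(1)] by blast+
  have symR: "sym R" unfolding R_def sym_def using P by blast
  have symRs: "\<And>x y. (x, y) \<in> R\<^sup>* \<Longrightarrow> (y, x) \<in> R\<^sup>*"
    using symR by (meson sym_def sym_rtrancl)
  have sep: "vertex_separator V E S" and minS: "\<forall>T. T \<subset> S \<longrightarrow> \<not> vertex_separator V E T"
    using assms(4) unfolding minimal_vertex_separator_def by auto
  have SV: "S \<subset> V" and ncW: "\<not> connected_on W E"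
    using sep unfolding vertex_separator_def W_def by auto
  have "\<not> vertex_separator V E (S - {s})" using minS s by blast
  moreover have "S - {s} \<subset> V" using SV by blast
  ultimately have cT: "connected_on (V - (S - {s})) E" unfolding vertex_separator_def by blast
  have VT: "V - (S - {s}) = W \<union> {s}" using s SV unfolding W_def by blast
  have reach: "\<And>x. x \<in> W \<Longrightarrow> (x, s) \<in> R'\<^sup>*"
    using cT unfolding connected_on_def VT R'_def by blast
  have uW: "u \<in> W" using u W_def by simp
  have sW: "s \<notin> W" using s W_def by simp
  define C where "C = {w \<in> W. (u, w) \<in> R\<^sup>*}"
  have compnb: "\<exists>z. z \<in> W \<and> (x, z) \<in> R\<^sup>* \<and> E z s" if xW: "x \<in> W" for x
  proof (rule ccontr)
    assume no: "\<not> ?thesis"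
    define K where "K = {w \<in> W. (x, w) \<in> R\<^sup>*}"
    have "s \<in> K"
    proof (rule closed_reach[of x s "W \<union> {s}" E K])
      show "(x, s) \<in> {(a, b). a \<in> W \<union> {s} \<and> b \<in> W \<union> {s} \<and> E a b}\<^sup>*"
        using reach[OF xW] unfolding R'_def .
      show "x \<in> K" using xW unfolding K_def by simp
      fix w w' assume "w \<in> K" "w' \<in> W \<union> {s}" "E w w'"
      then show "w' \<in> K" using no unfolding K_def R_def
        by (auto intro: rtrancl_into_rtrancl)
    qed
    then show False using sW K_def by simp
  qed
  have "\<exists>z0. z0 \<in> W \<and> z0 \<notin> C"
  proof (rule ccontr)
    assume "\<not> ?thesis"
    then have "W \<subseteq> C" by blast
    then have "\<forall>x\<in>W. \<forall>y\<in>W. (x, y) \<in> R\<^sup>*"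
      unfolding C_def using symRs by (blast intro: rtrancl_trans)
    then show False using ncW uW unfolding connected_on_def R_def by blast
  qed
  then obtain z0 where z0: "z0 \<in> W" "z0 \<notin> C" by blast
  obtain z where z: "z \<in> W" "(z0, z) \<in> R\<^sup>*" "E z s" using compnb[OF z0(1)] by blast
  have zC: "z \<notin> C"
  proof
    assume "z \<in> C"
    then have "(u, z0) \<in> R\<^sup>*" unfolding C_def using symRs z(2) by (blast intro: rtrancl_trans)
    then show False using z0 C_def by simp
  qed
  show "E u s \<or> E v s"
  proof (rule ccontr)
    assume nus: "\<not> (E u s \<or> E v s)"
    have allno: "\<not> E w s" if "(u, w) \<in> R\<^sup>*" for w
      using that
    proof (induction rule: rtrancl_induct)
      case base then show ?case using nus by simp
    next
      case (step w w')
      show ?case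
      proof
        assume ws': "E w' s"
        have w'W: "w' \<in> W" "E w w'" using step(2) R_def by auto
        have "(u, w') \<in> R\<^sup>*" using step by (blast intro: rtrancl_into_rtrancl)
        then have "w' \<in> C" using C_def w'W by simp
        have nzw': "\<not> E z w'"
        proof
          assume "E z w'"
          then have "(w', z) \<in> R" using R_def w'W z(1) P by blast
          then have "z \<in> C" using \<open>(u, w') \<in> R\<^sup>*\<close> C_def z(1) by (blast intro: rtrancl_into_rtrancl)
          then show False using zC by simp
        qed
        have nzw: "\<not> E z w"
        proof
          assume "E z w"
          then have "(w, z) \<in> R" using R_def step(2) z(1) P by blast
          then have "z \<in> C" using step(1) C_def z(1) by (blast intro: rtrancl_into_rtrancl)
          then show False using zC by simp
        qed
        have "\<not> E s w" using step(3) P by blast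
        moreover have "E s w'" using ws' P by blast
        moreover have "E w' w" using w'W P by blast
        ultimately show False using P4[of z s w' w] z(3) nzw' nzw by blast
      qed
    qed
    define K where "K = C"
    have "s \<in> K"
    proof (rule closed_reach[of u s "W \<union> {s}" E K])
      show "(u, s) \<in> {(a, b). a \<in> W \<union> {s} \<and> b \<in> W \<union> {s} \<and> E a b}\<^sup>*"
        using reach[OF uW] unfolding R'_def .
      show "u \<in> K" using uW unfolding K_def C_def by simp
      fix w w' assume "w \<in> K" "w' \<in> W \<union> {s}" "E w w'"
      then show "w' \<in> K" using allno unfolding K_def C_def R_def
        by (auto intro: rtrancl_into_rtrancl)
    qed
    then show False using sW K_def C_def by simp
  qed
qed

end
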